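(* Let $(R,\mathfrak{m})$ be a commutative Artinian local ring with identity, $\mathfrak{m}\neq0$ and $\mathfrak{m}^2=0$, and let $q\in R[x]$ be an irreducible GE polynomial. For every integer $n\ge2$: if $n$ is even then $\{2,4,6,\dots,n-2,n\}\subseteq L(q^n)$; if $n$ is odd then $\{3,5,7,\dots,n-2,n\}\subseteq L(q^n)$.
   Context: A generalized Eisenstein (GE) polynomial is a nonconstant monic polynomial $x^d+f_{d-1}x^{d-1}+\dots+f_0\in R[x]$ with $f_i\in\mathfrak{m}$ for all $i<d$. A nonunit polynomial is irreducible if in any factorization into two polynomials one factor is a unit of $R[x]$. A positive integer $k$ is a length of $f$ if $f$ is a product of $k$ irreducible polynomials; $L(f)$ denotes the set of lengths of $f$. *)

theory Defs
  imports "HOL-Computational_Algebra.Polynomial" "HOL-Computational_Algebra.Factorial_Ring"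
begin

definition ring_ideal :: "'a::comm_ring_1 set \<Rightarrow> bool" where
  "ring_ideal I \<longleftrightarrow> 0 \<in> I \<and> (\<forall>a\<in>I. \<forall>b\<in>I. a + b \<in> I) \<and> (\<forall>r. \<forall>a\<in>I. r * a \<in> I)"

definition maximal_ideal :: "'a::comm_ring_1 set \<Rightarrow> bool" where
  "maximal_ideal M \<longleftrightarrow> ring_ideal M \<and> M \<noteq> UNIV \<and>
     (\<forall>J. ring_ideal J \<and> M \<subseteq> J \<longrightarrow> J = M \<or> J = UNIV)"

definition local_ring_with :: "'a::comm_ring_1 set \<Rightarrow> bool" where
  "local_ring_with m \<longleftrightarrow> maximal_ideal m \<and> (\<forall>J. maximal_ideal J \<longrightarrow> J = m)"

definition artinian :: "'a::comm_ring_1 itself \<Rightarrow> bool" where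
  "artinian _ \<longleftrightarrow> (\<forall>I :: nat \<Rightarrow> 'a set. (\<forall>n. ring_ideal (I n)) \<and> (\<forall>n. I (Suc n) \<subseteq> I n)
       \<longrightarrow> (\<exists>N. \<forall>n\<ge>N. I n = I N))"

definition GE_poly :: "'a::comm_ring_1 set \<Rightarrow> 'a poly \<Rightarrow> bool" where
  "GE_poly m f \<longleftrightarrow> degree f > 0 \<and> lead_coeff f = 1 \<and> (\<forall>i < degree f. coeff f i \<in> m)"

definition lengths :: "'a::comm_ring_1 poly \<Rightarrow> nat set" where
  "lengths f = {k. k > 0 \<and> (\<exists>xs. length xs = k \<and> (\<forall>x\<in>set xs. irreducible x) \<and> prod_list xs = f)}"

end

theory Submission
  imports Defs
begin

locale lm =
  fixes m :: "'a::comm_ring_1 set"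
  assumes idl: "ring_ideal m" and one: "1 \<notin> m"
    and unit: "\<And>r. r \<notin> m \<Longrightarrow> \<exists>c. r * c = 1"
    and sq: "\<And>a b. a \<in> m \<Longrightarrow> b \<in> m \<Longrightarrow> a * b = 0"
begin

lemma zero[simp]: "0 \<in> m" using idl unfolding ring_ideal_def by auto
lemma addm: "a \<in> m \<Longrightarrow> b \<in> m \<Longrightarrow> a + b \<in> m" using idl unfolding ring_ideal_def by auto
lemma mulL: "a \<in> m \<Longrightarrow> r * a \<in> m" using idl unfolding ring_ideal_def by auto
lemma mulR: "a \<in> m \<Longrightarrow> a * r \<in> m" using mulL[of a r] by (simp add: mult.commute)
lemma negm: "a \<in> m \<Longrightarrow> - a \<in> m" using mulL[of a "-1"] by simp
lemma diffm: "a \<in> m \<Longrightarrow> b \<in> m \<Longrightarrow> a - b \<in> m" using addm[OF _ negm[of b]] by simp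

lemma summ: "(\<And>i. i \<in> A \<Longrightarrow> f i \<in> m) \<Longrightarrow> sum f A \<in> m"
proof (induction A rule: infinite_finite_induct)
  case (insert x F) then show ?case by (simp add: addm)
qed auto

lemma nm_mult: assumes "x \<notin> m" "y \<notin> m" shows "x * y \<notin> m"
proof
  assume h: "x * y \<in> m"
  obtain c where "x * c = 1" using unit assms(1) by blast
  then have "c * (x * y) = y" by (metis mult.assoc mult.commute mult_1)
  with mulL[OF h, of c] assms(2) show False by simp
qed

definition is_low :: "'a poly \<Rightarrow> nat \<Rightarrow> bool" where
  "is_low p i \<longleftrightarrow> coeff p i \<notin> m \<and> (\<forall>k<i. coeff p k \<in> m)"
definition is_high :: "'a poly \<Rightarrow> nat \<Rightarrow> bool" where
  "is_high p i \<longleftrightarrow> coeff p i \<notin> m \<and> (\<forall>k>i. coeff p k \<in> m)"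

lemma split_sum:
  fixes n :: nat
  assumes "i \<le> n" "\<And>k. k \<le> n \<Longrightarrow> k \<noteq> i \<Longrightarrow> f k \<in> m" "f i \<notin> m"
  shows "(\<Sum>k\<le>n. f k) \<notin> m"
proof
  assume h: "(\<Sum>k\<le>n. f k) \<in> m"
  have e: "(\<Sum>k\<le>n. f k) = f i + (\<Sum>k\<in>{..n}-{i}. f k)"
    using assms(1) sum.remove[of "{..n}" i f] by simp
  have r: "(\<Sum>k\<in>{..n}-{i}. f k) \<in> m" by (rule summ) (use assms(2) in auto)
  have "f i = (\<Sum>k\<le>n. f k) - (\<Sum>k\<in>{..n}-{i}. f k)" using e by simp
  with diffm[OF h r] assms(3) show False by simp
qed

lemma low_mult: assumes "is_low g i" "is_low h j" shows "is_low (g*h) (i+j)"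
  unfolding is_low_def
proof (intro conjI allI impI)
  fix n assume n: "n < i + j"
  show "coeff (g*h) n \<in> m" unfolding coeff_mult
  proof (rule summ)
    fix k assume kn: "k \<in> {..n}"
    show "coeff g k * coeff h (n - k) \<in> m"
    proof (cases "k < i")
      case True then show ?thesis using assms(1) mulR unfolding is_low_def by blast
    next
      case False then have "n - k < j" using n kn by auto
      then show ?thesis using assms(2) mulL unfolding is_low_def by blast
    qed
  qed
next
  show "coeff (g*h) (i+j) \<notin> m" unfolding coeff_mult
  proof (rule split_sum[of i])
    fix k assume k: "k \<le> i + j" "k \<noteq> i"
    show "coeff g k * coeff h (i + j - k) \<in> m"
    proof (cases "k < i")
      case True then show ?thesis using assms(1) mulR unfolding is_low_def by blast
    next
      case False then have "i + j - k < j" using k by linarith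
      then show ?thesis using assms(2) mulL unfolding is_low_def by blast
    qed
  qed (use assms nm_mult in \<open>auto simp: is_low_def\<close>)
qed

lemma high_mult: assumes "is_high g i" "is_high h j" shows "is_high (g*h) (i+j)"
  unfolding is_high_def
proof (intro conjI allI impI)
  fix n assume n: "n > i + j"
  show "coeff (g*h) n \<in> m" unfolding coeff_mult
  proof (rule summ)
    fix k assume k: "k \<in> {..n}"
    show "coeff g k * coeff h (n - k) \<in> m"
    proof (cases "k > i")
      case True then show ?thesis using assms(1) mulR unfolding is_high_def by blast
    next
      case False then have "n - k > j" using n k by auto
      then show ?thesis using assms(2) mulL unfolding is_high_def by blast
    qed
  qed
next
  show "coeff (g*h) (i+j) \<notin> m" unfolding coeff_mult
  proof (rule split_sum[of i])
    fix k assume k: "k \<le> i + j" "k \<noteq> i"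
    show "coeff g k * coeff h (i + j - k) \<in> m"
    proof (cases "k > i")
      case True then show ?thesis using assms(1) mulR unfolding is_high_def by blast
    next
      case False then have "i + j - k > j" using k by linarith
      then show ?thesis using assms(2) mulL unfolding is_high_def by blast
    qed
  qed (use assms nm_mult in \<open>auto simp: is_high_def\<close>)
qed

lemma all_m_mult: assumes "\<forall>k. coeff g k \<in> m" shows "coeff (g*h) n \<in> m"
  unfolding coeff_mult by (rule summ) (use assms mulR in auto)

lemma low_ex: assumes "coeff p k \<notin> m" shows "\<exists>i. is_low p i"
proof -
  let ?i = "LEAST i. coeff p i \<notin> m"
  have "coeff p ?i \<notin> m" by (rule LeastI[of _ k]) (rule assms)
  moreover have "\<forall>k<?i. coeff p k \<in> m" using not_less_Least by blast
  ultimately show ?thesis unfolding is_low_def by blast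
qed

lemma high_ex: assumes "coeff p k \<notin> m" shows "\<exists>i. is_high p i"
proof -
  let ?S = "{i. coeff p i \<notin> m}"
  have sub: "?S \<subseteq> {..degree p}"
  proof
    fix i assume "i \<in> ?S"
    then show "i \<in> {..degree p}" using coeff_eq_0[of p i] by (cases "i \<le> degree p") auto
  qed
  then have fin: "finite ?S" using finite_subset by blast
  have ne: "k \<in> ?S" using assms by simp
  have "Max ?S \<in> ?S" using fin ne Max_in by blast
  moreover have "\<forall>k>Max ?S. coeff p k \<in> m"
    using Max_ge[OF fin] by (meson mem_Collect_eq not_le)
  ultimately show ?thesis unfolding is_high_def by blast
qed

lemma low_unique: "is_low p i \<Longrightarrow> is_low p j \<Longrightarrow> i = j"
  unfolding is_low_def by (meson linorder_neqE_nat)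
lemma high_unique: "is_high p i \<Longrightarrow> is_high p j \<Longrightarrow> i = j"
  unfolding is_high_def by (meson linorder_neqE_nat)

lemma nilp_unit: assumes "\<forall>k. coeff e k \<in> m" shows "(1 + e) * (1 - e) = 1"
proof -
  have "e * e = 0"
    by (rule poly_eqI) (simp add: coeff_mult sq assms)
  then show ?thesis by (simp add: algebra_simps)
qed

lemma unit_factor:
  assumes lf: "is_low f D" and hf: "is_high f D" and fab: "f = a * b"
    and la: "is_low a 0" and lb: "is_low b j"
  shows "a dvd 1"
proof -
  have "is_low f (0 + j)" using low_mult[OF la lb] fab by simp
  then have jD: "j = D" using low_unique lf by auto
  obtain i' where hi: "is_high a i'" using high_ex la unfolding is_low_def by blast
  obtain j' where hj: "is_high b j'" using high_ex lb unfolding is_low_def by blast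
  have "is_high f (i' + j')" using high_mult[OF hi hj] fab by simp
  then have s: "i' + j' = D" using high_unique hf by auto
  have "j' \<ge> j" using hj lb unfolding is_high_def is_low_def by (meson not_le)
  then have i0: "i' = 0" using s jD by linarith
  have am: "\<forall>k>0. coeff a k \<in> m" using hi i0 unfolding is_high_def by simp
  obtain c where c: "coeff a 0 * c = 1" using unit la unfolding is_low_def by blast
  define e where "e = smult c a - 1"
  have ecoef: "\<forall>k. coeff e k \<in> m"
  proof
    fix k show "coeff e k \<in> m"
    proof (cases "k = 0")
      case True then show ?thesis using c by (simp add: e_def mult.commute)
    next
      case False then show ?thesis using am mulL by (simp add: e_def)
    qed
  qed
  have "(1 + e) * (1 - e) = 1" by (rule nilp_unit[OF ecoef])
  then have "a * smult c (1 - e) = 1" by (simp add: e_def mult.commute)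
  then show ?thesis by (metis dvdI)
qed

lemma irr:
  assumes f0: "coeff f 0 \<noteq> 0" and D: "D > 0" and fD: "coeff f D \<notin> m"
    and fi: "\<And>i. i \<noteq> D \<Longrightarrow> coeff f i \<in> m"
  shows "irreducible f"
proof -
  have lf: "is_low f D" using fD fi unfolding is_low_def by auto
  have hf: "is_high f D" using fD fi unfolding is_high_def by auto
  have nz: "f \<noteq> 0" using f0 by auto
  have nu: "\<not> f dvd 1"
  proof
    assume "f dvd 1"
    then obtain u where u: "1 = f * u" by (auto elim: dvdE)
    have "\<exists>k. coeff u k \<notin> m"
    proof (rule ccontr)
      assume "\<not> ?thesis"
      then have "coeff (u * f) 0 \<in> m" using all_m_mult by blast
      then show False using u one by (simp add: mult.commute)
    qed
    then obtain i where "is_low u i" using low_ex by blast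
    then have "is_low (f * u) (D + i)" using low_mult[OF lf] by blast
    then have "is_low 1 (D + i)" using u by simp
    moreover have "is_low 1 0" using one unfolding is_low_def by simp
    ultimately have "D + i = 0" using low_unique by blast
    then show False using D by simp
  qed
  have "a dvd 1 \<or> b dvd 1" if fab: "f = a * b" for a b
  proof -
    have "\<exists>k. coeff a k \<notin> m"
    proof (rule ccontr)
      assume "\<not> ?thesis"
      then have "coeff (a * b) D \<in> m" using all_m_mult by blast
      then show False using fab fD by simp
    qed
    then obtain i where li: "is_low a i" using low_ex by blast
    have "\<exists>k. coeff b k \<notin> m"
    proof (rule ccontr)
      assume "\<not> ?thesis"
      then have "coeff (b * a) D \<in> m" using all_m_mult by blast
      then show False using fab fD by (simp add: mult.commute)
    qed
    then obtain j where lj: "is_low b j" using low_ex by blast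
    have "i = 0 \<or> j = 0"
    proof (rule ccontr)
      assume "\<not> ?thesis"
      then have "coeff a 0 \<in> m" "coeff b 0 \<in> m" using li lj unfolding is_low_def by auto
      then have "coeff f 0 = 0" using fab sq by (simp add: coeff_mult_0)
      then show False using f0 by simp
    qed
    then show ?thesis
    proof
      assume "i = 0" then show ?thesis using unit_factor[OF lf hf fab _ lj] li by simp
    next
      assume "j = 0" then show ?thesis using unit_factor[OF lf hf _ _ li, of b] lj fab
        by (simp add: mult.commute)
    qed
  qed
  then show ?thesis using nz nu unfolding irreducible_def by blast
qed

end

theorem lemma4p5:
  fixes m :: "'a::comm_ring_1 set" and q :: "'a poly" and n :: nat
  assumes "artinian TYPE('a)"
    and "local_ring_with m"
    and "m \<noteq> {0}"
    and "\<forall>a\<in>m. \<forall>b\<in>m. a * b = 0"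
    and "GE_poly m q"
    and "irreducible q"
    and "n \<ge> 2"
  shows "(even n \<longrightarrow> {k. even k \<and> 2 \<le> k \<and> k \<le> n} \<subseteq> lengths (q ^ n)) \<and>
         (odd n \<longrightarrow> {k. odd k \<and> 3 \<le> k \<and> k \<le> n} \<subseteq> lengths (q ^ n))"
proof -
  have mx: "maximal_ideal m" using assms(2) unfolding local_ring_with_def by blast
  have idl: "ring_ideal m" using mx unfolding maximal_ideal_def by blast
  have zero0: "0 \<in> m" using idl unfolding ring_ideal_def by blast
  have one: "1 \<notin> m"
  proof
    assume "1 \<in> m"
    then have "\<forall>r. r * 1 \<in> m" using idl unfolding ring_ideal_def by blast
    then show False using mx unfolding maximal_ideal_def by auto
  qed
  have unit: "\<exists>c. r * c = 1" if r: "r \<notin> m" for r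
  proof -
    define J where "J = {x + r * s | x s. x \<in> m}"
    have "ring_ideal J" unfolding ring_ideal_def J_def
    proof (intro conjI ballI allI)
      have "(0::'a) = 0 + r * 0" by simp
      then show "0 \<in> {x + r * s |x s. x \<in> m}" using zero0 by blast
    next
      fix a b assume "a \<in> {x + r * s |x s. x \<in> m}" "b \<in> {x + r * s |x s. x \<in> m}"
      then obtain x s y t where "a = x + r * s" "b = y + r * t" "x \<in> m" "y \<in> m" by blast
      then have "a + b = (x + y) + r * (s + t)" "x + y \<in> m"
        using idl unfolding ring_ideal_def by (auto simp: algebra_simps)
      then show "a + b \<in> {x + r * s |x s. x \<in> m}" by blast
    next
      fix r' a assume "a \<in> {x + r * s |x s. x \<in> m}"
      then obtain x s where "a = x + r * s" "x \<in> m" by blast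
      then have "r' * a = r' * x + r * (r' * s)" "r' * x \<in> m"
        using idl unfolding ring_ideal_def by (auto simp: algebra_simps)
      then show "r' * a \<in> {x + r * s |x s. x \<in> m}" by blast
    qed
    moreover have "m \<subseteq> J"
    proof
      fix y assume "y \<in> m"
      moreover have "y = y + r * 0" by simp
      ultimately show "y \<in> J" unfolding J_def by blast
    qed
    moreover have "r \<in> J"
    proof -
      have "r = 0 + r * 1" by simp
      then show ?thesis unfolding J_def using zero0 by blast
    qed
    ultimately have "J = UNIV" using mx r unfolding maximal_ideal_def by blast
    then obtain x s where xs: "1 = x + r * s" "x \<in> m" unfolding J_def by blast
    have "x * x = 0" using assms(4) xs by blast
    have rs: "r * s = 1 - x" using xs(1) by (simp add: eq_diff_eq add.commute)
    have "r * (s * (1 + x)) = (r * s) * (1 + x)" by (simp add: mult.assoc)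
    also have "\<dots> = (1 - x) * (1 + x)" using rs by simp
    also have "\<dots> = 1 - x * x" by (simp add: algebra_simps)
    finally have "r * (s * (1 + x)) = 1" using \<open>x * x = 0\<close> by simp
    then show ?thesis by blast
  qed
  interpret lm m using idl one unit assms(4) by unfold_locales auto
  obtain a where a: "a \<in> m" "a \<noteq> 0" using assms(3) idl zero by blast
  define d where "d = degree q"
  have d0: "d > 0" and lc: "coeff q d = 1" and qi: "\<forall>i<d. coeff q i \<in> m"
    using assms(5) unfolding GE_poly_def d_def by auto
  have lq: "is_low q d" using lc qi one unfolding is_low_def by simp
  have "\<forall>k>d. coeff q k \<in> m" using coeff_eq_0[of q] zero unfolding d_def by auto
  then have hq: "is_high q d" using lc one unfolding is_high_def by simp
  have pw: "is_low (q^j) (d*j) \<and> is_high (q^j) (d*j)" for j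
  proof (induction j)
    case 0 then show ?case using one unfolding is_low_def is_high_def by simp
  next
    case (Suc j)
    then show ?case using low_mult[OF lq, of "q^j" "d*j"] high_mult[OF hq, of "q^j" "d*j"] by simp
  qed
  have irrj: "irreducible (q^j + [:b:])" if j: "j \<ge> 2" and b: "b \<in> m" "b \<noteq> 0" for j b
  proof (rule irr[of _ "d*j"])
    obtain t where t: "j = Suc (Suc t)" using j by (metis add_2_eq_Suc le_Suc_ex)
    have "coeff q 0 * coeff q 0 = 0" using qi d0 sq by simp
    then have "coeff q 0 ^ j = 0" using t by (simp add: mult.assoc[symmetric])
    then show "coeff (q ^ j + [:b:]) 0 \<noteq> 0" using b by (simp add: coeff_0_power)
    show "d * j > 0" using d0 j by simp
    show "coeff (q ^ j + [:b:]) (d * j) \<notin> m"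
    proof -
      have "d * j \<noteq> 0" using d0 j by simp
      then have "coeff [:b:] (d*j) = 0" by (cases "d*j") simp_all
      then show ?thesis using pw[of j] unfolding is_low_def by simp
    qed
    fix i assume i: "i \<noteq> d * j"
    have "coeff (q^j) i \<in> m" using pw[of j] i unfolding is_low_def is_high_def
      by (meson linorder_neqE_nat)
    then show "coeff (q ^ j + [:b:]) i \<in> m" using b addm
      by (simp add: coeff_pCons split: nat.split)
  qed
  have main: "k \<in> lengths (q ^ n)" if k: "2 \<le> k" "k \<le> n" "even (n - k)" for k
  proof (cases "k = n")
    case True
    have "prod_list (replicate n q) = q ^ n" by (simp add: prod_list_replicate)
    then show ?thesis unfolding lengths_def using True k assms(6)
      by (intro CollectI conjI exI[of _ "replicate n q"]) auto
  next
    case False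
    define j where "j = (n - k) div 2 + 1"
    have j2: "j \<ge> 2" using False k unfolding j_def by presburger
    have nj: "2 * j + (k - 2) = n" using k unfolding j_def by auto
    define xs where "xs = [q^j + [:a:], q^j + [:-a:]] @ replicate (k - 2) q"
    have aa: "[:a:] * [:-a:] = 0" using sq a by simp
    have "(q^j + [:a:]) * (q^j + [:-a:]) = q^j * q^j + [:a:] * [:-a:]"
      by (simp add: algebra_simps)
    also have "\<dots> = q ^ (2 * j)" using aa by (simp add: power_add[symmetric] mult_2)
    finally have "prod_list xs = q ^ (2*j) * q ^ (k - 2)"
      unfolding xs_def by (simp add: prod_list_replicate mult.assoc[symmetric])
    also have "\<dots> = q ^ n" using nj by (simp add: power_add[symmetric])
    finally have p: "prod_list xs = q ^ n" .
    have "\<forall>x\<in>set xs. irreducible x"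
      unfolding xs_def using irrj[OF j2 a] irrj[OF j2 negm[OF a(1)]] a(2) assms(6) by auto
    moreover have "length xs = k" unfolding xs_def using k by simp
    ultimately show ?thesis unfolding lengths_def using p k by auto
  qed
  show ?thesis using main assms(7) by auto
qed

end
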